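(* Let $\Omega\subset\mathbb{R}^n$ be a domain and let $u\in C^2(\Omega)$ be a non-positive $H_1$-subharmonic function in $\Omega$. For a constant $t>0$ let $u_t=\max(u,-t)$. Then for any open set $\omega\Subset\Omega$, $$\int_\omega|Du_t|\le C,$$ where $C>0$ depends on $\omega$ and $t$ (and $\Omega$), but is independent of $u$.
   Context: $H_1[u]=\operatorname{div}\big(\frac{Du}{\sqrt{1+|Du|^2}}\big)$. A function $u:\Omega\to[-\infty,\infty)$ is $H_1$-subharmonic if it is upper semicontinuous, $\{u=-\infty\}$ has measure zero, and for every open $\omega\subset\Omega$ and $h\in C^2(\overline\omega)$ with $H_1[h]\le0$ in $\omega$ and $h\ge u$ on $\partial\omega$ one has $h\ge u$ in $\omega$. *)

theory Defs
  imports "HOL-Analysis.Analysis"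
begin

definition pd :: "'n::finite \<Rightarrow> (real^'n \<Rightarrow> real) \<Rightarrow> real^'n \<Rightarrow> real" where
  "pd i f x = frechet_derivative f (at x) (axis i 1)"

definition grad :: "(real^'n::finite \<Rightarrow> real) \<Rightarrow> real^'n \<Rightarrow> real^'n" where
  "grad f x = (\<chi> i. pd i f x)"

text \<open>|Df|(x): norm of the gradient where f is differentiable, 0 elsewhere
  (for Lipschitz f the gradient exists a.e., so this is the a.e. gradient).\<close>
definition grad_norm :: "(real^'n::finite \<Rightarrow> real) \<Rightarrow> real^'n \<Rightarrow> real" where
  "grad_norm f x = (if f differentiable (at x) then norm (grad f x) else 0)"

definition C2_on :: "(real^'n::finite) set \<Rightarrow> (real^'n \<Rightarrow> real) \<Rightarrow> bool" where
  "C2_on U f \<longleftrightarrow> f differentiable_on U \<and> (\<forall>i. (pd i f) differentiable_on U) \<and>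
     (\<forall>i j. continuous_on U (pd j (pd i f)))"

definition C2_closure :: "(real^'n::finite) set \<Rightarrow> (real^'n \<Rightarrow> real) \<Rightarrow> bool" where
  "C2_closure w f \<longleftrightarrow> (\<exists>U. open U \<and> closure w \<subseteq> U \<and> C2_on U f)"

definition H1 :: "(real^'n::finite \<Rightarrow> real) \<Rightarrow> real^'n \<Rightarrow> real" where
  "H1 h x = (\<Sum>i\<in>UNIV. pd i (\<lambda>y. pd i h y / sqrt (1 + (norm (grad h y))\<^sup>2)) x)"

definition H1_subharmonic :: "(real^'n::finite) set \<Rightarrow> (real^'n \<Rightarrow> ereal) \<Rightarrow> bool" where
  "H1_subharmonic \<Omega> u \<longleftrightarrow>
     (\<forall>x\<in>\<Omega>. u x \<noteq> \<infinity>) \<and>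
     (\<forall>x\<in>\<Omega>. \<forall>c. u x < c \<longrightarrow> eventually (\<lambda>y. u y < c) (at x within \<Omega>)) \<and>
     {x\<in>\<Omega>. u x = -\<infinity>} \<in> null_sets lebesgue \<and>
     (\<forall>w h. open w \<and> compact (closure w) \<and> closure w \<subseteq> \<Omega> \<and> C2_closure w h \<and>
        (\<forall>x\<in>w. H1 h x \<le> 0) \<and> (\<forall>x\<in>frontier w. u x \<le> ereal (h x))
        \<longrightarrow> (\<forall>x\<in>w. u x \<le> ereal (h x)))"

end

theory Submission
  imports Defs
begin

lemma pd_eq: "(f has_derivative f') (at x) \<Longrightarrow> pd i f x = f' (axis i 1)"
  unfolding pd_def by (metis frechet_derivative_at)

lemma pd_cong_open:
  assumes "open U" "x \<in> U" "\<And>y. y \<in> U \<Longrightarrow> f y = g y"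
  shows "pd i f x = pd i g x"
proof -
  have "\<And>f'. (f has_derivative f') (at x) \<longleftrightarrow> (g has_derivative f') (at x)"
    using has_derivative_transform_within_open assms by metis
  then show ?thesis unfolding pd_def frechet_derivative_def by simp
qed

lemma C2_diff: "C2_on U f \<Longrightarrow> open U \<Longrightarrow> y \<in> U \<Longrightarrow> f differentiable (at y)"
  unfolding C2_on_def using differentiable_on_eq_differentiable_at by blast

lemma C2_pd_diff: "C2_on U f \<Longrightarrow> open U \<Longrightarrow> y \<in> U \<Longrightarrow> (pd k f) differentiable (at y)"
  unfolding C2_on_def using differentiable_on_eq_differentiable_at by blast

lemma C2_pd_has: "C2_on U f \<Longrightarrow> open U \<Longrightarrow> y \<in> U \<Longrightarrow>
   ((pd k f) has_derivative frechet_derivative (pd k f) (at y)) (at y)"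
  using C2_pd_diff frechet_derivative_works by blast

lemma fd_axis: "frechet_derivative g (at y) (axis j 1) = pd j g y"
  unfolding pd_def ..

lemma norm_grad_sq: "(norm (grad f z))\<^sup>2 = (\<Sum>k\<in>UNIV. (pd k f z)\<^sup>2)"
  unfolding grad_def power2_norm_eq_inner inner_vec_def by (simp add: power2_eq_square)

lemma pd_G:
  assumes "C2_on U f" "open U" "y \<in> U"
  shows "pd i (\<lambda>z. pd i f z / sqrt (1 + (norm (grad f z))\<^sup>2)) y =
     pd i (pd i f) y / sqrt (1 + (norm (grad f y))\<^sup>2)
     - pd i f y * (\<Sum>k\<in>UNIV. pd k f y * pd i (pd k f) y) / (sqrt (1 + (norm (grad f y))\<^sup>2))^3"
proof -
  define D where "D k = frechet_derivative (pd k f) (at y)" for k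
  have hD: "\<And>k. ((pd k f) has_derivative D k) (at y)" unfolding D_def using C2_pd_has assms by blast
  define N where "N = (\<Sum>k\<in>UNIV. (pd k f y)\<^sup>2)"
  define S where "S = sqrt (1 + N)"
  have N0: "N \<ge> 0" unfolding N_def by (simp add: sum_nonneg)
  have S0: "S > 0" unfolding S_def using N0 by simp
  have "((\<lambda>z. pd i f z / sqrt (1 + (\<Sum>k\<in>UNIV. (pd k f z)\<^sup>2))) has_derivative
     (\<lambda>v. (D i v * S - pd i f y * ((\<Sum>k\<in>UNIV. of_nat 2 * D k v * (pd k f y)^(2-1)) * (inverse S / 2))) / (S * S))) (at y)"
    unfolding S_def N_def
    apply (rule has_derivative_divide')
      apply (rule hD)
     apply (rule has_derivative_real_sqrt[THEN has_derivative_eq_rhs])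
    using N0 unfolding N_def
      apply (auto intro!: derivative_eq_intros hD)
    done
  hence "pd i (\<lambda>z. pd i f z / sqrt (1 + (\<Sum>k\<in>UNIV. (pd k f z)\<^sup>2))) y =
     (D i (axis i 1) * S - pd i f y * ((\<Sum>k\<in>UNIV. of_nat 2 * D k (axis i 1) * (pd k f y)^(2-1)) * (inverse S / 2))) / (S * S)"
    by (rule pd_eq)
  moreover have "\<And>k. D k (axis i 1) = pd i (pd k f) y" unfolding D_def pd_def ..
  ultimately have e: "pd i (\<lambda>z. pd i f z / sqrt (1 + (\<Sum>k\<in>UNIV. (pd k f z)\<^sup>2))) y =
     (pd i (pd i f) y * S - pd i f y * ((\<Sum>k\<in>UNIV. 2 * pd i (pd k f) y * pd k f y) * (inverse S / 2))) / (S * S)"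
    by simp
  have s2: "(\<Sum>k\<in>UNIV. 2 * pd i (pd k f) y * pd k f y) = 2 * (\<Sum>k\<in>UNIV. pd k f y * pd i (pd k f) y)"
    by (simp add: sum_distrib_left mult_ac)
  have "(pd i (pd i f) y * S - pd i f y * ((\<Sum>k\<in>UNIV. 2 * pd i (pd k f) y * pd k f y) * (inverse S / 2))) / (S * S)
     = pd i (pd i f) y / S - pd i f y * (\<Sum>k\<in>UNIV. pd k f y * pd i (pd k f) y) / S^3"
    unfolding s2 using S0 by (simp add: field_simps power3_eq_cube)
  with e show ?thesis
    unfolding norm_grad_sq N_def[symmetric] S_def[symmetric] by simp
qed

definition Hform :: "('n::finite \<Rightarrow> real) \<Rightarrow> ('n \<Rightarrow> 'n \<Rightarrow> real) \<Rightarrow> real" where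
  "Hform p q = (\<Sum>i\<in>UNIV. q i i / sqrt (1 + (\<Sum>k\<in>UNIV. (p k)\<^sup>2))
       - p i * (\<Sum>k\<in>UNIV. p k * q i k) / (sqrt (1 + (\<Sum>k\<in>UNIV. (p k)\<^sup>2)))^3)"

lemma H1_formula:
  assumes "C2_on U f" "open U" "y \<in> U"
  shows "H1 f y = Hform (\<lambda>k. pd k f y) (\<lambda>i k. pd i (pd k f) y)"
  unfolding H1_def Hform_def using pd_G[OF assms] by (simp add: norm_grad_sq)

lemma has_deriv_quad:
  "((\<lambda>y::real^'n::finite. e * ((y - x0) \<bullet> (y - x0) - d\<^sup>2)) has_derivative (\<lambda>v. e * (2 * ((y - x0) \<bullet> v)))) (at y)"
  by (auto intro!: derivative_eq_intros simp: inner_commute)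

lemma pd_quad_sum:
  assumes "(u has_derivative u') (at y)"
  shows "pd k (\<lambda>y. u y + e * ((y - x0) \<bullet> (y - x0) - d\<^sup>2)) y = pd k u y + 2 * e * (y $ k - x0 $ k)"
proof -
  have "((\<lambda>y. u y + e * ((y - x0) \<bullet> (y - x0) - d\<^sup>2)) has_derivative (\<lambda>v. u' v + e * (2 * ((y - x0) \<bullet> v)))) (at y)"
    by (intro has_derivative_add assms has_deriv_quad)
  then have "pd k (\<lambda>y. u y + e * ((y - x0) \<bullet> (y - x0) - d\<^sup>2)) y = u' (axis k 1) + e * (2 * ((y - x0) \<bullet> axis k 1))"
    by (rule pd_eq)
  moreover have "pd k u y = u' (axis k 1)" using pd_eq[OF assms] .
  ultimately show ?thesis by (simp add: inner_axis)
qed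

lemma pd_lin:
  assumes "(g has_derivative g') (at y)"
  shows "pd j (\<lambda>y::real^'n::finite. g y + c * (y $ k - x0 $ k)) y = pd j g y + (if j = k then c else 0)"
proof -
  have "((\<lambda>y. g y + c * (y $ k - x0 $ k)) has_derivative (\<lambda>v. g' v + c * (v $ k))) (at y)"
    by (auto intro!: derivative_eq_intros assms bounded_linear_imp_has_derivative bounded_linear_vec_nth)
  then have "pd j (\<lambda>y. g y + c * (y $ k - x0 $ k)) y = g' (axis j 1) + c * (axis j 1 $ k)"
    by (rule pd_eq)
  moreover have "pd j g y = g' (axis j 1)" using pd_eq[OF assms] .
  ultimately show ?thesis by (simp add: axis_def)
qed

lemma C2_quad:
  fixes u :: "real^'n::finite \<Rightarrow> real" and e d :: real and x0 :: "real^'n"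
  assumes C2: "C2_on \<Omega> u" and op: "open \<Omega>"
  defines "h \<equiv> (\<lambda>y. u y + e * ((y - x0) \<bullet> (y - x0) - d\<^sup>2))"
  shows "C2_on \<Omega> h"
    and "\<And>y. y \<in> \<Omega> \<Longrightarrow> pd k h y = pd k u y + 2 * e * (y $ k - x0 $ k)"
    and "\<And>y. y \<in> \<Omega> \<Longrightarrow> pd j (pd k h) y = pd j (pd k u) y + (if j = k then 2 * e else 0)"
proof -
  have du: "\<And>y. y \<in> \<Omega> \<Longrightarrow> (u has_derivative frechet_derivative u (at y)) (at y)"
    using C2_diff[OF C2 op] frechet_derivative_works by blast
  show pk: "\<And>k y. y \<in> \<Omega> \<Longrightarrow> pd k h y = pd k u y + 2 * e * (y $ k - x0 $ k)"
    unfolding h_def using pd_quad_sum du by blast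
  have dpk: "\<And>k y. y \<in> \<Omega> \<Longrightarrow> ((\<lambda>y. pd k u y + 2 * e * (y $ k - x0 $ k)) has_derivative
       (\<lambda>v. frechet_derivative (pd k u) (at y) v + 2 * e * (v $ k))) (at y)"
    using C2_pd_has[OF C2 op]
    by (auto intro!: derivative_eq_intros bounded_linear_imp_has_derivative bounded_linear_vec_nth)
  show pjk: "\<And>j k y. y \<in> \<Omega> \<Longrightarrow> pd j (pd k h) y = pd j (pd k u) y + (if j = k then 2 * e else 0)"
  proof -
    fix j k y assume y: "y \<in> \<Omega>"
    have "pd j (pd k h) y = pd j (\<lambda>y. pd k u y + 2 * e * (y $ k - x0 $ k)) y"
      by (rule pd_cong_open[OF op y]) (simp add: pk)
    also have "\<dots> = pd j (pd k u) y + (if j = k then 2 * e else 0)"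
      using pd_lin[OF C2_pd_has[OF C2 op y]] by simp
    finally show "pd j (pd k h) y = pd j (pd k u) y + (if j = k then 2 * e else 0)" .
  qed
  show "C2_on \<Omega> h"
    unfolding C2_on_def
  proof (intro conjI allI)
    show "h differentiable_on \<Omega>"
      unfolding differentiable_on_eq_differentiable_at[OF op] h_def
    proof
      fix y assume y: "y \<in> \<Omega>"
      show "(\<lambda>y. u y + e * ((y - x0) \<bullet> (y - x0) - d\<^sup>2)) differentiable at y"
        using has_derivative_add[OF du[OF y] has_deriv_quad] by (rule differentiableI)
    qed
    fix k
    show "pd k h differentiable_on \<Omega>"
      unfolding differentiable_on_eq_differentiable_at[OF op]
    proof
      fix y assume y: "y \<in> \<Omega>"
      have "(pd k h has_derivative (\<lambda>v. frechet_derivative (pd k u) (at y) v + 2 * e * (v $ k))) (at y)"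
        by (rule has_derivative_transform_within_open[OF dpk[OF y] op y]) (simp add: pk)
      then show "pd k h differentiable at y" by (rule differentiableI)
    qed
  next
    fix j k
    have "continuous_on \<Omega> (\<lambda>y. pd k (pd j u) y + (if k = j then 2 * e else 0))"
      using C2 unfolding C2_on_def by (intro continuous_intros) auto
    then show "continuous_on \<Omega> (pd k (pd j h))"
      by (rule continuous_on_cong[THEN iffD1, rotated 2]) (auto simp: pjk)
  qed
qed

lemma Hform_cont:
  fixes P :: "'n::finite \<Rightarrow> 'a::metric_space \<Rightarrow> real"
  assumes "\<And>k. isCont (P k) a" "\<And>i k. isCont (Q i k) a"
  shows "isCont (\<lambda>p. Hform (\<lambda>k. P k p) (\<lambda>i k. Q i k p)) a"
proof -
  have pos: "sqrt (1 + (\<Sum>k\<in>UNIV. (P k a)\<^sup>2)) \<noteq> 0"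
  proof -
    have "(\<Sum>k\<in>UNIV. (P k a)\<^sup>2) \<ge> 0" by (simp add: sum_nonneg)
    then show ?thesis by simp
  qed
  have cS: "isCont (\<lambda>p. sqrt (1 + (\<Sum>k\<in>UNIV. (P k p)\<^sup>2))) a"
    by (intro continuous_intros assms)
  show ?thesis unfolding Hform_def
    apply (rule continuous_sum)
    apply (rule continuous_diff)
     apply (rule isCont_divide[OF assms(2) cS pos])
    apply (rule isCont_divide)
      apply (intro continuous_mult assms continuous_sum)
     apply (intro continuous_power cS)
    using pos by simp
qed

lemma H1_nonneg:
  fixes u :: "real^'n::finite \<Rightarrow> real"
  assumes op: "open \<Omega>" and C2: "C2_on \<Omega> u" and sub: "H1_subharmonic \<Omega> (\<lambda>x. ereal (u x))"
    and x0: "x0 \<in> \<Omega>"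
  shows "H1 u x0 \<ge> 0"
proof (rule ccontr)
  assume neg: "\<not> H1 u x0 \<ge> 0"
  define \<Gamma> where "\<Gamma> p = Hform (\<lambda>k. pd k u (fst p) + 2 * snd p * (fst p $ k - x0 $ k))
      (\<lambda>j k. pd j (pd k u) (fst p) + (if j = k then 2 * snd p else 0))" for p :: "(real^'n) \<times> real"
  have G0: "\<Gamma> (x0, 0) = H1 u x0" unfolding \<Gamma>_def H1_formula[OF C2 op x0] fst_conv snd_conv by (simp cong: if_cong)
  have c1: "isCont (\<lambda>p. pd k u (fst p)) (x0, 0)" for k
  proof -
    have "pd k u differentiable at x0" using C2_pd_diff[OF C2 op x0] .
    then have "isCont (pd k u) x0" by (simp add: differentiable_imp_continuous_within)
    then show ?thesis by (auto intro!: isCont_o2[where f=fst] continuous_intros)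
  qed
  have c2: "isCont (\<lambda>p. pd j (pd k u) (fst p)) (x0, 0)" for j k
  proof -
    have "continuous_on \<Omega> (pd j (pd k u))" using C2 unfolding C2_on_def by blast
    then have "isCont (pd j (pd k u)) x0"
      using continuous_on_eq_continuous_at[OF op] x0 by auto
    then show ?thesis by (auto intro!: isCont_o2[where f=fst] continuous_intros)
  qed
  have c3: "isCont (\<lambda>p. if j = k then 2 * snd p else 0) (x0, 0::real)" for j k :: 'n
    by (cases "j = k") (auto intro!: continuous_intros)
  have pos: "sqrt (1 + (\<Sum>k\<in>UNIV. (a k)\<^sup>2)) \<noteq> 0" for a :: "'n \<Rightarrow> real"
  proof -
    have "(\<Sum>k\<in>UNIV. (a k)\<^sup>2) \<ge> 0" by (simp add: sum_nonneg)
    then show ?thesis by simp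
  qed
  have cont: "isCont \<Gamma> (x0, 0)"
    unfolding \<Gamma>_def
    by (intro Hform_cont continuous_intros c1 c2 c3)
  obtain r where r: "r > 0" "\<And>p. dist p (x0, 0) < r \<Longrightarrow> \<Gamma> p < 0"
  proof -
    have "- \<Gamma> (x0, 0) > 0" using neg G0 by simp
    then obtain r where "r > 0" "\<And>p. dist p (x0, 0) < r \<Longrightarrow> dist (\<Gamma> p) (\<Gamma> (x0, 0)) < - \<Gamma> (x0, 0)"
      using cont unfolding continuous_at_eps_delta by blast
    then show ?thesis using that by (force simp: dist_real_def)
  qed
  obtain r0 where r0: "r0 > 0" "cball x0 r0 \<subseteq> \<Omega>" using op x0 open_contains_cball by blast
  define d where "d = min (r/3) r0"
  have d: "d > 0" "d < r/2" "d \<le> r0" using r r0 by (auto simp: d_def)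
  define h where "h = (\<lambda>y. u y + d * ((y - x0) \<bullet> (y - x0) - d\<^sup>2))"
  have C2h: "C2_on \<Omega> h" unfolding h_def by (rule C2_quad(1)[OF C2 op])
  have ph: "\<And>k y. y \<in> \<Omega> \<Longrightarrow> pd k h y = pd k u y + 2 * d * (y $ k - x0 $ k)"
    unfolding h_def by (rule C2_quad(2)[OF C2 op])
  have pph: "\<And>j k y. y \<in> \<Omega> \<Longrightarrow> pd j (pd k h) y = pd j (pd k u) y + (if j = k then 2 * d else 0)"
    unfolding h_def by (rule C2_quad(3)[OF C2 op])
  have sub_ball: "cball x0 d \<subseteq> \<Omega>" using d r0 by auto
  have Hneg: "H1 h y \<le> 0" if y: "y \<in> ball x0 d" for y
  proof -
    have yO: "y \<in> \<Omega>" using y sub_ball by auto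
    have "H1 h y = \<Gamma> (y, d)"
      unfolding H1_formula[OF C2h op yO] \<Gamma>_def using ph[OF yO] pph[OF yO] by (simp cong: if_cong)
    moreover have "dist (y, d) (x0, 0) < r"
      unfolding dist_Pair_Pair
      using y d by (intro sqrt_sum_squares_half_less) (auto simp: dist_commute dist_real_def)
    ultimately show ?thesis using r by force
  qed
  have "\<forall>x\<in>ball x0 d. ereal (u x) \<le> ereal (h x)"
  proof -
    have "open (ball x0 d) \<and> compact (closure (ball x0 d)) \<and> closure (ball x0 d) \<subseteq> \<Omega> \<and>
       C2_closure (ball x0 d) h \<and> (\<forall>x\<in>ball x0 d. H1 h x \<le> 0) \<and>
       (\<forall>x\<in>frontier (ball x0 d). ereal (u x) \<le> ereal (h x))"
    proof (intro conjI)
      show "C2_closure (ball x0 d) h" unfolding C2_closure_def using op sub_ball C2h d by auto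
      show "\<forall>x\<in>frontier (ball x0 d). ereal (u x) \<le> ereal (h x)"
      proof
        fix x assume "x \<in> frontier (ball x0 d)"
        then have "norm (x - x0) = d" using d by (simp add: dist_norm norm_minus_commute)
        then have "(x - x0) \<bullet> (x - x0) = d\<^sup>2" by (metis power2_norm_eq_inner)
        then show "ereal (u x) \<le> ereal (h x)" by (simp add: h_def)
      qed
    qed (use d sub_ball Hneg in auto)
    then show ?thesis using sub unfolding H1_subharmonic_def by blast
  qed
  then have "u x0 \<le> h x0" using d by auto
  then show False using d by (simp add: h_def) (metis mult_pos_pos not_le zero_less_power)
qed

lemma cs_bounded:
  fixes f :: "real^'n::finite \<Rightarrow> real"
  assumes "continuous_on UNIV f" "compact K" "\<And>x. x \<notin> K \<Longrightarrow> f x = 0"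
  shows "\<exists>M. \<forall>x. \<bar>f x\<bar> \<le> M"
proof -
  have "compact (f ` K)" using assms by (meson compact_continuous_image continuous_on_subset subset_UNIV)
  then obtain M where "\<forall>y\<in>f ` K. norm y \<le> M" using compact_imp_bounded bounded_iff by blast
  then have "\<forall>x. \<bar>f x\<bar> \<le> max M 0" using assms(3) by (metis abs_zero image_eqI max.cobounded2 max.coboundedI1 real_norm_def)
  then show ?thesis by blast
qed

lemma cs_integrable:
  fixes f :: "real^'n::finite \<Rightarrow> real"
  assumes "continuous_on UNIV f" "compact K" "\<And>x. x \<notin> K \<Longrightarrow> f x = 0"
  shows "integrable lborel f"
proof -
  obtain M where M: "\<And>x. \<bar>f x\<bar> \<le> M" using cs_bounded[OF assms] by blast
  have Kb: "K \<in> sets lborel" using assms(2) by (simp add: compact_imp_closed borel_closed)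
  have i1: "integrable lborel (\<lambda>x. M * indicator K x :: real)"
    using Kb emeasure_compact_finite[OF assms(2)] by (intro integrable_mult_right) auto
  have i2: "f \<in> borel_measurable lborel" using assms(1) by (simp add: borel_measurable_continuous_onI)
  have i3: "\<And>x. norm (f x) \<le> norm (M * indicator K x :: real)"
    using M assms(3) by (auto simp: indicator_def) (smt (verit) M)
  have i4: "AE x in lborel. norm (f x) \<le> norm (M * indicator K x :: real)"
    using i3 by simp
  show ?thesis by (rule Bochner_Integration.integrable_bound[OF i1 i2 i4])
qed

lemma dir_deriv:
  assumes "(F has_derivative F') (at (x + s0 *\<^sub>R e))"
  shows "((\<lambda>s. F (x + s *\<^sub>R e)) has_real_derivative F' e) (at s0)"
proof -
  have bl: "bounded_linear F'" using assms has_derivative_bounded_linear by blast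
  have "((\<lambda>s. x + s *\<^sub>R e) has_derivative (\<lambda>s. s *\<^sub>R e)) (at s0)"
    by (auto intro!: derivative_eq_intros)
  from has_derivative_compose[OF this assms]
  have "((\<lambda>s. F (x + s *\<^sub>R e)) has_derivative (\<lambda>s. F' (s *\<^sub>R e))) (at s0)" by (simp add: o_def)
  moreover have "(\<lambda>s. F' (s *\<^sub>R e)) = (*) (F' e)"
    using linear.scaleR[OF bounded_linear.linear[OF bl]] by (auto simp: fun_eq_iff)
  ultimately show ?thesis unfolding has_field_derivative_def by simp
qed

lemma pd_zero_outside:
  fixes F :: "real^'n::finite \<Rightarrow> real"
  assumes "closed K" "\<And>x. x \<notin> K \<Longrightarrow> F x = 0" "x \<notin> K"
  shows "pd i F x = 0"
proof -
  have "pd i F x = pd i (\<lambda>_. 0) x"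
    by (rule pd_cong_open[of "- K"]) (use assms in auto)
  also have "\<dots> = 0" by (rule pd_eq) (rule has_derivative_const)
  finally show ?thesis .
qed

lemma IBP:
  fixes F :: "real^'n::finite \<Rightarrow> real"
  assumes K: "compact K" and F0: "\<And>x. x \<notin> K \<Longrightarrow> F x = 0"
    and dF: "\<And>x. F differentiable (at x)" and cF: "continuous_on UNIV (pd i F)"
  shows "integrable lborel (pd i F)" "integral\<^sup>L lborel (pd i F) = 0"
proof -
  define e :: "real^'n" where "e = axis i 1"
  have cK: "closed K" using K compact_imp_closed by blast
  have P0: "\<And>x. x \<notin> K \<Longrightarrow> pd i F x = 0" using pd_zero_outside[of K F] cK F0 by blast
  obtain M where M: "\<And>x. \<bar>pd i F x\<bar> \<le> M" using cs_bounded[OF cF K P0] by blast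
  obtain R0 where "\<forall>x\<in>K. norm x \<le> R0" using compact_imp_bounded[OF K] unfolding bounded_iff by blast
  then have R0: "K \<subseteq> cball 0 R0" by (auto simp: dist_norm)
  have "\<And>x. isCont F x" using dF by (simp add: differentiable_imp_continuous_within)
  then have cont: "continuous_on UNIV F" by (simp add: continuous_at_imp_continuous_on)
  have Fint: "integrable lborel F" by (rule cs_integrable[OF cont K F0])
  have mF: "F \<in> borel_measurable lborel" using cont by (simp add: borel_measurable_continuous_onI)
  have mP: "pd i F \<in> borel_measurable lborel" using cF by (simp add: borel_measurable_continuous_onI)
  have Fd: "\<And>z. (F has_derivative frechet_derivative F (at z)) (at z)"
    using dF frechet_derivative_works by blast
  have gder: "((\<lambda>s. F (x + s *\<^sub>R e)) has_real_derivative pd i F (x + s *\<^sub>R e)) (at s)" for x s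
    using dir_deriv[OF Fd[of "x + s *\<^sub>R e"]] unfolding e_def pd_def .
  define h :: "nat \<Rightarrow> real" where "h n = 1 / real (Suc n)" for n
  have h0: "\<And>n. h n > 0" "\<And>n. h n \<le> 1" by (auto simp: h_def field_simps)
  define D where "D n x = (F (x + h n *\<^sub>R e) - F x) / h n" for n x
  have mD: "D n \<in> borel_measurable lborel" for n
  proof -
    have "continuous_on UNIV (D n)" unfolding D_def
      by (intro continuous_intros continuous_on_compose2[OF cont]) (use h0(1)[of n] in \<open>auto intro: continuous_intros\<close>)
    then show ?thesis by (simp add: borel_measurable_continuous_onI)
  qed
  have Dbound: "\<bar>D n x\<bar> \<le> M * indicator (cball 0 (R0 + 1)) x" for n x
  proof (cases "x \<in> cball 0 (R0 + 1)")
    case True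
    obtain z where "0 < z" "z < h n" "F (x + h n *\<^sub>R e) - F (x + 0 *\<^sub>R e) = (h n - 0) * pd i F (x + z *\<^sub>R e)"
      using MVT2[OF h0(1)[of n], of "\<lambda>s. F (x + s *\<^sub>R e)" "\<lambda>s. pd i F (x + s *\<^sub>R e)"] gder by blast
    then have "D n x = pd i F (x + z *\<^sub>R e)" using h0(1)[of n] by (simp add: D_def)
    then show ?thesis using True M by simp
  next
    case False
    have ne: "norm e = 1" by (simp add: e_def)
    have "x \<notin> K" using False R0 by auto
    moreover have "x + h n *\<^sub>R e \<notin> K"
    proof
      assume "x + h n *\<^sub>R e \<in> K"
      then have "norm (x + h n *\<^sub>R e) \<le> R0" using R0 by auto
      moreover have "norm x \<le> norm (x + h n *\<^sub>R e) + norm (h n *\<^sub>R e)"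
        by (metis add_diff_cancel norm_triangle_ineq4)
      ultimately show False using False h0[of n] ne by auto
    qed
    ultimately show ?thesis using False F0 by (simp add: D_def)
  qed
  have wint: "integrable lborel (\<lambda>x. M * indicator (cball (0::real^'n) (R0 + 1)) x :: real)"
    apply (intro integrable_mult_right integrable_real_indicator)
     apply simp
    using emeasure_compact_finite[OF compact_cball, of "0::real^'n" "R0+1"]
    apply (simp add: less_top)
    done
  have lim: "(\<lambda>n. D n x) \<longlonglongrightarrow> pd i F x" for x
  proof -
    have "((\<lambda>s. (F (x + (0 + s) *\<^sub>R e) - F (x + 0 *\<^sub>R e)) / s) \<longlongrightarrow> pd i F (x + 0 *\<^sub>R e)) (at 0)"
      using gder[of x 0] unfolding DERIV_def .
    then have l1: "((\<lambda>s. (F (x + s *\<^sub>R e) - F x) / s) \<longlongrightarrow> pd i F x) (at 0)" by simp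
    have "filterlim h (at 0) sequentially"
      unfolding filterlim_at
    proof
      have "\<forall>n. h n \<in> UNIV \<and> h n \<noteq> 0" using h0(1) by (metis UNIV_I less_irrefl)
      then show "\<forall>\<^sub>F n in sequentially. h n \<in> UNIV \<and> h n \<noteq> 0" by (simp add: always_eventually)
      show "h \<longlonglongrightarrow> 0" unfolding h_def using LIMSEQ_Suc[OF lim_const_over_n[of 1]] by simp
    qed
    from filterlim_compose[OF l1 this] show ?thesis unfolding D_def o_def by simp
  qed
  have DC: "integrable lborel (pd i F)" "\<And>n. integrable lborel (D n)"
      "(\<lambda>n. integral\<^sup>L lborel (D n)) \<longlonglongrightarrow> integral\<^sup>L lborel (pd i F)"
  proof -
    have lim': "AE x in lborel. (\<lambda>n. D n x) \<longlonglongrightarrow> pd i F x" using lim by simp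
    have bnd: "AE x in lborel. norm (D n x) \<le> M * indicator (cball (0::real^'n) (R0 + 1)) x" for n
      using Dbound[of n] by simp
    show "integrable lborel (pd i F)" "\<And>n. integrable lborel (D n)"
      "(\<lambda>n. integral\<^sup>L lborel (D n)) \<longlonglongrightarrow> integral\<^sup>L lborel (pd i F)"
      using integrable_dominated_convergence[OF mP mD wint lim' bnd]
        integrable_dominated_convergence2[OF mP mD wint lim' bnd]
        integral_dominated_convergence[OF mP mD wint lim' bnd] by blast+
  qed
  then show "integrable lborel (pd i F)" by blast
  have "integral\<^sup>L lborel (D n) = 0" for n
  proof -
    have tr: "integral\<^sup>L lborel (\<lambda>x. F (x + h n *\<^sub>R e)) = integral\<^sup>L lborel F"
    proof -
      have "integral\<^sup>L lborel F = integral\<^sup>L (distr lborel borel ((+) (h n *\<^sub>R e))) F"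
        by (simp add: lborel_distr_plus)
      also have "\<dots> = integral\<^sup>L lborel (\<lambda>x. F (h n *\<^sub>R e + x))"
        by (rule integral_distr) (use mF in auto)
      finally show ?thesis by (simp add: add.commute)
    qed
    have Fint2: "integrable lborel (\<lambda>x. F (x + h n *\<^sub>R e))"
    proof -
      have "integrable (distr lborel borel ((+) (h n *\<^sub>R e))) F" using Fint by (simp add: lborel_distr_plus)
      then have "integrable lborel (\<lambda>x. F (h n *\<^sub>R e + x))" by (subst (asm) integrable_distr_eq) (use mF in auto)
      then show ?thesis by (simp add: add.commute)
    qed
    have "integral\<^sup>L lborel (D n) = (integral\<^sup>L lborel (\<lambda>x. F (x + h n *\<^sub>R e)) - integral\<^sup>L lborel F) / h n"
      unfolding D_def integral_divide_zero Bochner_Integration.integral_diff[OF Fint2 Fint] ..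
    then show ?thesis using tr by simp
  qed
  then have "(\<lambda>n. integral\<^sup>L lborel (D n)) = (\<lambda>n. 0)" by (simp add: fun_eq_iff)
  with DC(3) have "(\<lambda>n. 0::real) \<longlonglongrightarrow> integral\<^sup>L lborel (pd i F)" by simp
  then show "integral\<^sup>L lborel (pd i F) = 0" using LIMSEQ_const_iff by metis
qed

lemma gsq_deriv: "((\<lambda>s::real. (max 0 s)\<^sup>2) has_real_derivative 2 * max 0 s) (at s)"
proof (cases "s > 0")
  case True
  have "((\<lambda>s::real. s\<^sup>2) has_real_derivative 2 * s) (at s)"
    by (auto intro!: derivative_eq_intros)
  then have "((\<lambda>s::real. (max 0 s)\<^sup>2) has_real_derivative 2 * s) (at s)"
    by (rule has_field_derivative_transform_within_open[of _ _ _ "{0<..}"]) (use True in auto)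
  then show ?thesis using True by simp
next
  case False
  show ?thesis
  proof (cases "s < 0")
    case True
    have "((\<lambda>s::real. 0) has_real_derivative 0) (at s)" by simp
    then have "((\<lambda>s::real. (max 0 s)\<^sup>2) has_real_derivative 0) (at s)"
      by (rule has_field_derivative_transform_within_open[of _ _ _ "{..<0}"]) (use True in auto)
    then show ?thesis using True by simp
  next
    case False
    with \<open>\<not> s > 0\<close> have s0: "s = 0" by simp
    have "((\<lambda>h. ((max 0 (0 + h))\<^sup>2 - (max 0 0)\<^sup>2) / h) \<longlongrightarrow> 0) (at (0::real))"
    proof (rule Lim_null_comparison)
      show "\<forall>\<^sub>F x in at 0. norm (((max 0 (0 + x))\<^sup>2 - (max 0 0)\<^sup>2) / x) \<le> \<bar>x\<bar>"
      proof (rule always_eventually, rule allI)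
        fix x :: real
        show "norm (((max 0 (0 + x))\<^sup>2 - (max 0 0)\<^sup>2) / x) \<le> \<bar>x\<bar>"
          by (cases "x > 0") (auto simp: power2_eq_square)
      qed
      show "((\<lambda>x::real. \<bar>x\<bar>) \<longlongrightarrow> 0) (at 0)"
        using tendsto_rabs[OF tendsto_ident_at[of "0::real" UNIV]] by simp
    qed
    then show ?thesis unfolding s0 DERIV_def by simp
  qed
qed

definition phi :: "real^'n::finite \<Rightarrow> real \<Rightarrow> real^'n \<Rightarrow> real" where
  "phi c R x = (max 0 (R\<^sup>2 - (x - c) \<bullet> (x - c)))\<^sup>2"

lemma phi_deriv:
  "(phi c R has_derivative (\<lambda>v. (- (2 * ((x - c) \<bullet> v))) * (2 * max 0 (R\<^sup>2 - (x - c) \<bullet> (x - c))))) (at x)"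
proof -
  have "((\<lambda>x. R\<^sup>2 - (x - c) \<bullet> (x - c)) has_derivative (\<lambda>v. - (2 * ((x - c) \<bullet> v)))) (at x)"
    by (auto intro!: derivative_eq_intros simp: inner_commute)
  from DERIV_compose_FDERIV[OF gsq_deriv this]
  show ?thesis unfolding phi_def[abs_def] .
qed

lemma pd_phi: "pd i (phi c R) x = - 4 * max 0 (R\<^sup>2 - (x - c) \<bullet> (x - c)) * (x $ i - c $ i)"
  using pd_eq[OF phi_deriv[of c R x], of i] by (simp add: inner_axis algebra_simps)

lemma phi_nonneg: "phi c R x \<ge> 0" by (simp add: phi_def)

lemma phi_zero: "x \<notin> cball c R \<Longrightarrow> R \<ge> 0 \<Longrightarrow> phi c R x = 0"
proof -
  assume "x \<notin> cball c R" "R \<ge> 0"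
  then have "norm (x - c) > R" by (simp add: dist_norm norm_minus_commute)
  then have "(norm (x - c))\<^sup>2 > R\<^sup>2" using \<open>R \<ge> 0\<close> by (simp add: power_strict_mono)
  then show ?thesis by (simp add: phi_def power2_norm_eq_inner)
qed

lemma cont_pd_phi: "continuous_on UNIV (pd i (phi c R))"
  unfolding pd_phi by (intro continuous_intros)

lemma G_diff:
  assumes "C2_on U f" "open U" "y \<in> U"
  shows "(\<lambda>z. pd i f z / sqrt (1 + (norm (grad f z))\<^sup>2)) differentiable (at y)"
proof -
  define D where "D k = frechet_derivative (pd k f) (at y)" for k
  have hD: "\<And>k. ((pd k f) has_derivative D k) (at y)" unfolding D_def using C2_pd_has assms by blast
  define N where "N = (\<Sum>k\<in>UNIV. (pd k f y)\<^sup>2)"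
  define S where "S = sqrt (1 + N)"
  have N0: "N \<ge> 0" unfolding N_def by (simp add: sum_nonneg)
  have "((\<lambda>z. pd i f z / sqrt (1 + (\<Sum>k\<in>UNIV. (pd k f z)\<^sup>2))) has_derivative
     (\<lambda>v. (D i v * S - pd i f y * ((\<Sum>k\<in>UNIV. of_nat 2 * D k v * (pd k f y)^(2-1)) * (inverse S / 2))) / (S * S))) (at y)"
    unfolding S_def N_def
    apply (rule has_derivative_divide')
      apply (rule hD)
     apply (rule has_derivative_real_sqrt[THEN has_derivative_eq_rhs])
    using N0 unfolding N_def
      apply (auto intro!: derivative_eq_intros hD)
    done
  then show ?thesis unfolding norm_grad_sq by (rule differentiableI)
qed

lemma grad_zero: "(\<And>k. pd k f x = 0) \<Longrightarrow> grad f x = 0"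
  unfolding grad_def by (simp add: vec_eq_iff)

lemma gn_bound:
  fixes u :: "real^'n::finite \<Rightarrow> real"
  assumes op: "open \<Omega>" and C2: "C2_on \<Omega> u" and x: "x \<in> \<Omega>"
  shows "grad_norm (\<lambda>y. max (u y) (- t)) x \<le> exp (u x + t) * norm (grad u x)"
proof -
  have ud: "u differentiable_on \<Omega>" using C2 unfolding C2_on_def by blast
  then have uc: "continuous_on \<Omega> u" by (rule differentiable_imp_continuous_on)
  have udx: "u differentiable (at x)" using C2_diff[OF C2 op x] .
  have rhs: "exp (u x + t) * norm (grad u x) \<ge> 0" by simp
  consider "u x > - t" | "u x < - t" | "u x = - t" by linarith
  then show ?thesis
  proof cases
    case 1
    define V where "V = \<Omega> \<inter> u -` {- t<..}"
    have oV: "open V" unfolding V_def by (rule continuous_open_preimage[OF uc op]) auto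
    have xV: "x \<in> V" using 1 x by (simp add: V_def)
    have eqV: "\<And>y. y \<in> V \<Longrightarrow> max (u y) (- t) = u y" by (auto simp: V_def)
    have "(\<lambda>y. max (u y) (- t)) differentiable (at x)"
    proof -
      obtain u' where "(u has_derivative u') (at x)" using udx unfolding differentiable_def by blast
      then have "((\<lambda>y. max (u y) (- t)) has_derivative u') (at x)"
        by (rule has_derivative_transform_within_open[OF _ oV xV]) (simp add: eqV)
      then show ?thesis by (rule differentiableI)
    qed
    moreover have "grad (\<lambda>y. max (u y) (- t)) x = grad u x"
    proof -
      have "\<And>k. pd k (\<lambda>y. max (u y) (- t)) x = pd k u x"
        by (rule pd_cong_open[OF oV xV]) (simp add: eqV)
      then show ?thesis unfolding grad_def by simp
    qed
    ultimately have "grad_norm (\<lambda>y. max (u y) (- t)) x = norm (grad u x)" by (simp add: grad_norm_def)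
    moreover have "exp (u x + t) \<ge> 1" using 1 by simp
    moreover have "1 * norm (grad u x) \<le> exp (u x + t) * norm (grad u x)"
      using \<open>exp (u x + t) \<ge> 1\<close> by (intro mult_right_mono) auto
    ultimately show ?thesis by simp
  next
    case 2
    define V where "V = \<Omega> \<inter> u -` {..< - t}"
    have oV: "open V" unfolding V_def by (rule continuous_open_preimage[OF uc op]) auto
    have xV: "x \<in> V" using 2 x by (simp add: V_def)
    have eqV: "\<And>y. y \<in> V \<Longrightarrow> max (u y) (- t) = - t" by (auto simp: V_def)
    have "pd k (\<lambda>y. max (u y) (- t)) x = 0" for k
    proof -
      have "pd k (\<lambda>y. max (u y) (- t)) x = pd k (\<lambda>y. - t) x"
        by (rule pd_cong_open[OF oV xV]) (simp add: eqV)
      also have "\<dots> = 0" by (rule pd_eq) (rule has_derivative_const)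
      finally show ?thesis .
    qed
    then have "grad (\<lambda>y. max (u y) (- t)) x = 0" by (rule grad_zero)
    then show ?thesis using rhs by (simp add: grad_norm_def)
  next
    case 3
    show ?thesis
    proof (cases "(\<lambda>y. max (u y) (- t)) differentiable (at x)")
      case True
      define f' where "f' = frechet_derivative (\<lambda>y. max (u y) (- t)) (at x)"
      have hd: "((\<lambda>y. max (u y) (- t)) has_derivative f') (at x)"
        unfolding f'_def using True frechet_derivative_works by blast
      have "f' = (\<lambda>h. 0)"
      proof (rule has_derivative_local_min[OF hd])
        have "\<forall>y. max (u x) (- t) \<le> max (u y) (- t)" using 3 by simp
        then show "\<forall>\<^sub>F y in at x. max (u x) (- t) \<le> max (u y) (- t)" by (rule always_eventually)
      qed
      then have "pd k (\<lambda>y. max (u y) (- t)) x = 0" for k using pd_eq[OF hd] by simp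
      then have "grad (\<lambda>y. max (u y) (- t)) x = 0" by (rule grad_zero)
      then show ?thesis using rhs by (simp add: grad_norm_def)
    next
      case False
      then show ?thesis using rhs by (simp add: grad_norm_def)
    qed
  qed
qed

definition Mloc :: "real^'n::finite \<Rightarrow> real \<Rightarrow> real \<Rightarrow> real" where
  "Mloc c \<delta> t = exp t * (4 * (2 * \<delta>)^3 * measure lborel (cball c (2 * \<delta>)) / (9 * \<delta>^4) + measure lborel (ball c \<delta>))"

lemma sqrt_one_pos: "sqrt (1 + (\<Sum>k\<in>UNIV. (a k)\<^sup>2)) > 0"
proof -
  have "(\<Sum>k\<in>UNIV. (a k)\<^sup>2) \<ge> 0" by (simp add: sum_nonneg)
  then show ?thesis by simp
qed

lemma local_est:
  fixes u :: "real^'n::finite \<Rightarrow> real" and c :: "real^'n" and \<delta> t :: real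
  assumes op: "open \<Omega>" and C2: "C2_on \<Omega> u" and neg: "\<And>x. x \<in> \<Omega> \<Longrightarrow> u x \<le> 0"
    and Hpos: "\<And>x. x \<in> \<Omega> \<Longrightarrow> H1 u x \<ge> 0" and d0: "\<delta> > 0" and cb: "cball c (2 * \<delta>) \<subseteq> \<Omega>"
  shows "\<exists>B. B \<in> borel_measurable lborel \<and> (\<forall>x. 0 \<le> B x) \<and>
     (\<forall>x\<in>ball c \<delta>. grad_norm (\<lambda>y. max (u y) (- t)) x \<le> B x) \<and>
     (\<integral>\<^sup>+x. ennreal (B x) \<partial>lborel) \<le> ennreal (Mloc c \<delta> t)"
proof -
  define R where "R = 2 * \<delta>"
  define K where "K = cball c R"
  define L where "L = 4 * R^3"
  define \<phi> where "\<phi> = phi c R"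
  define W where "W y = sqrt (1 + (norm (grad u y))\<^sup>2)" for y
  define G where "G i y = pd i u y / W y" for i y
  define P where "P y = \<phi> y * exp (u y)" for y
  define F where "F i y = (if y \<in> \<Omega> then P y * G i y else 0)" for i y
  have R0: "R > 0" using d0 by (simp add: R_def)
  have KO: "K \<subseteq> \<Omega>" using cb by (simp add: K_def R_def)
  have cK: "compact K" by (simp add: K_def)
  have Wpos: "W y > 0" for y
  proof -
    have "(norm (grad u y))\<^sup>2 \<ge> 0" by simp
    then have "1 + (norm (grad u y))\<^sup>2 > 0" by linarith
    then show ?thesis unfolding W_def by simp
  qed
  have phi0: "\<And>y. y \<notin> K \<Longrightarrow> \<phi> y = 0" unfolding \<phi>_def K_def using phi_zero R0 less_imp_le by blast
  have F0: "\<And>i y. y \<notin> K \<Longrightarrow> F i y = 0" by (simp add: F_def P_def phi0)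
  have ud: "\<And>y. y \<in> \<Omega> \<Longrightarrow> (u has_derivative frechet_derivative u (at y)) (at y)"
    using C2_diff[OF C2 op] frechet_derivative_works by blast
  have Gd: "\<And>i y. y \<in> \<Omega> \<Longrightarrow> (G i has_derivative frechet_derivative (G i) (at y)) (at y)"
  proof -
    fix i y assume "y \<in> \<Omega>"
    have "G i = (\<lambda>z. pd i u z / sqrt (1 + (norm (grad u z))\<^sup>2))" by (simp add: fun_eq_iff G_def W_def)
    then show "(G i has_derivative frechet_derivative (G i) (at y)) (at y)"
      using G_diff[OF C2 op \<open>y \<in> \<Omega>\<close>, of i] frechet_derivative_works by metis
  qed
  have Pder: "(P has_derivative (\<lambda>v. frechet_derivative \<phi> (at y) v * exp (u y) + \<phi> y * (frechet_derivative u (at y) v * exp (u y)))) (at y)"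
    if "y \<in> \<Omega>" for y
  proof -
    have "(\<phi> has_derivative frechet_derivative \<phi> (at y)) (at y)"
      unfolding \<phi>_def using phi_deriv differentiableI frechet_derivative_works by blast
    then show ?thesis unfolding P_def
      by (auto intro!: derivative_eq_intros ud[OF that] simp: algebra_simps)
  qed
  have pdP: "pd i P y = pd i \<phi> y * exp (u y) + \<phi> y * (pd i u y * exp (u y))" if "y \<in> \<Omega>" for i y
    using pd_eq[OF Pder[OF that], of i] by (simp add: pd_def)
  have Fder: "(F i has_derivative (\<lambda>v. P y * frechet_derivative (G i) (at y) v +
      (frechet_derivative \<phi> (at y) v * exp (u y) + \<phi> y * (frechet_derivative u (at y) v * exp (u y))) * G i y)) (at y)"
    if "y \<in> \<Omega>" for i y
    using has_derivative_mult[OF Pder[OF that] Gd[OF that]]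
    by (rule has_derivative_transform_within_open[OF _ op that]) (simp add: F_def)
  have pdF: "pd i (F i) y = P y * pd i (G i) y + (pd i \<phi> y * exp (u y) + \<phi> y * (pd i u y * exp (u y))) * G i y"
    if "y \<in> \<Omega>" for i y
    using pd_eq[OF Fder[OF that], of i] by (simp add: pd_def)
  have Fdiff: "F i differentiable (at y)" for i y
  proof (cases "y \<in> \<Omega>")
    case True then show ?thesis using Fder differentiableI by blast
  next
    case False
    then have yK: "y \<in> - K" using KO by auto
    have "((\<lambda>_. 0) has_derivative (\<lambda>_. 0)) (at y)" by simp
    then have "(F i has_derivative (\<lambda>_. 0)) (at y)"
      by (rule has_derivative_transform_within_open[of _ _ _ _ "- K"]) (use yK cK F0 compact_imp_closed in auto)
    then show ?thesis by (rule differentiableI)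
  qed
  have uc: "continuous_on \<Omega> u" using C2 unfolding C2_on_def by (blast intro: differentiable_imp_continuous_on)
  have cpu: "continuous_on \<Omega> (pd k u)" for k
    using C2 unfolding C2_on_def by (blast intro: differentiable_imp_continuous_on)
  have cppu: "continuous_on \<Omega> (pd j (pd k u))" for j k
    using C2 unfolding C2_on_def by blast
  have cphi: "continuous_on UNIV \<phi>"
  proof -
    have "\<phi> differentiable (at y)" for y unfolding \<phi>_def using phi_deriv differentiableI by blast
    then show ?thesis by (simp add: continuous_at_imp_continuous_on differentiable_imp_continuous_within)
  qed
  have cpphi: "continuous_on UNIV (pd i \<phi>)" for i unfolding \<phi>_def by (rule cont_pd_phi)
  define W' where "W' y = sqrt (1 + (\<Sum>k\<in>UNIV. (pd k u y)\<^sup>2))" for y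
  have WW': "W = W'" by (simp add: fun_eq_iff W_def W'_def norm_grad_sq)
  have W'nz: "W' y \<noteq> 0" for y using sqrt_one_pos[of "\<lambda>k. pd k u y"] by (simp add: W'_def)
  have cW': "continuous_on \<Omega> W'" unfolding W'_def by (intro continuous_intros cpu)
  define Q where "Q i y = \<phi> y * exp (u y) * (pd i (pd i u) y / W' y - pd i u y * (\<Sum>k\<in>UNIV. pd k u y * pd i (pd k u) y) / (W' y)^3)
      + (pd i \<phi> y * exp (u y) + \<phi> y * (pd i u y * exp (u y))) * (pd i u y / W' y)" for i y
  have GG: "G i = (\<lambda>z. pd i u z / sqrt (1 + (norm (grad u z))\<^sup>2))" for i by (simp add: fun_eq_iff G_def W_def)
  have pdG: "pd i (G i) y = pd i (pd i u) y / W' y - pd i u y * (\<Sum>k\<in>UNIV. pd k u y * pd i (pd k u) y) / (W' y)^3"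
    if "y \<in> \<Omega>" for i y
    unfolding GG pd_G[OF C2 op that] by (simp add: W'_def norm_grad_sq)
  have FQ: "pd i (F i) y = Q i y" if "y \<in> \<Omega>" for i y
    unfolding pdF[OF that] pdG[OF that] Q_def P_def G_def WW' ..
  have cQ: "continuous_on \<Omega> (Q i)" for i
  proof -
    have c1: "continuous_on \<Omega> (\<lambda>y. pd i (pd i u) y / W' y)" by (intro continuous_intros cppu cW') (simp_all add: W'nz)
    have c2: "continuous_on \<Omega> (\<lambda>y. pd i u y * (\<Sum>k\<in>UNIV. pd k u y * pd i (pd k u) y) / (W' y)^3)"
      by (intro continuous_intros cppu cpu cW') (simp add: W'nz)
    have c3: "continuous_on \<Omega> (\<lambda>y. pd i u y / W' y)" by (intro continuous_intros cpu cW') (simp_all add: W'nz)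
    have c4: "continuous_on \<Omega> \<phi>" using cphi continuous_on_subset by blast
    have c5: "continuous_on \<Omega> (pd i \<phi>)" using cpphi continuous_on_subset by blast
    have c6: "continuous_on \<Omega> (\<lambda>y. exp (u y))" by (intro continuous_intros uc)
    show ?thesis unfolding Q_def
      by (intro continuous_on_add continuous_on_mult continuous_on_diff c1 c2 c3 c4 c5 c6 cpu)
  qed
  have cpdF: "continuous_on UNIV (pd i (F i))" for i
  proof -
    have "isCont (pd i (F i)) y" for y
    proof (cases "y \<in> \<Omega>")
      case True
      have "continuous_on \<Omega> (pd i (F i))" using cQ[of i] by (rule continuous_on_cong[THEN iffD1, rotated 2]) (auto simp: FQ)
      then show ?thesis using continuous_on_eq_continuous_at[OF op] True by blast
    next
      case False
      then have yK: "y \<in> - K" using KO by auto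
      have oK: "open (- K)" using cK compact_imp_closed by blast
      have "\<And>z. z \<in> - K \<Longrightarrow> pd i (F i) z = 0"
        using pd_zero_outside[of K "F i"] cK compact_imp_closed F0 by blast
      moreover have "continuous_on (- K) (\<lambda>_. 0::real)" by (rule continuous_on_const)
      ultimately have "continuous_on (- K) (pd i (F i))"
        using continuous_on_cong by (metis (mono_tags, lifting))
      then show ?thesis using continuous_on_eq_continuous_at[OF oK] yK by blast
    qed
    then show ?thesis by (simp add: continuous_at_imp_continuous_on)
  qed
  define S where "S y = (\<Sum>i\<in>UNIV. pd i (F i) y)" for y
  have IB: "integrable lborel (pd i (F i)) \<and> integral\<^sup>L lborel (pd i (F i)) = 0" for i
    using IBP[of K "F i" i] cK F0 Fdiff cpdF by blast
  have Sint: "integrable lborel S" unfolding S_def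
    by (rule Bochner_Integration.integrable_sum) (use IB in blast)
  have Sz: "integral\<^sup>L lborel S = 0" unfolding S_def by (subst Bochner_Integration.integral_sum) (use IB in auto)
  have cS: "continuous_on UNIV S" unfolding S_def by (intro continuous_intros cpdF)
  have S0: "S y = 0" if "y \<notin> K" for y
  proof -
    have "pd i (F i) y = 0" for i using pd_zero_outside[of K "F i"] cK compact_imp_closed F0 that by blast
    then show ?thesis by (simp add: S_def)
  qed
  define E where "E y = \<phi> y * exp (u y) * ((norm (grad u y))\<^sup>2 / W y)" for y
  have sumG: "(\<Sum>i\<in>UNIV. pd i u y * G i y) = (norm (grad u y))\<^sup>2 / W y" for y
    unfolding G_def norm_grad_sq by (simp add: sum_divide_distrib power2_eq_square)
  have H1G: "H1 u y = (\<Sum>i\<in>UNIV. pd i (G i) y)" for y unfolding H1_def GG ..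
  have Sid: "S y = P y * H1 u y + exp (u y) * (\<Sum>i\<in>UNIV. pd i \<phi> y * G i y) + E y" if "y \<in> \<Omega>" for y
  proof -
    have "S y = (\<Sum>i\<in>UNIV. P y * pd i (G i) y + exp (u y) * (pd i \<phi> y * G i y) + \<phi> y * exp (u y) * (pd i u y * G i y))"
      unfolding S_def using pdF[OF that] by (simp add: algebra_simps)
    also have "\<dots> = P y * (\<Sum>i\<in>UNIV. pd i (G i) y) + exp (u y) * (\<Sum>i\<in>UNIV. pd i \<phi> y * G i y)
        + \<phi> y * exp (u y) * (\<Sum>i\<in>UNIV. pd i u y * G i y)"
      by (simp add: sum.distrib sum_distrib_left)
    finally show ?thesis unfolding sumG H1G E_def .
  qed
  have ngW: "norm (grad u y) \<le> W y" for y
    unfolding W_def by (rule real_le_rsqrt) simp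
  have phiG: "(\<Sum>i\<in>UNIV. pd i \<phi> y * G i y) \<ge> - L * indicator K y" for y
  proof -
    define m where "m = max 0 (R\<^sup>2 - (y - c) \<bullet> (y - c))"
    have m0: "m \<ge> 0" by (simp add: m_def)
    have pp: "pd i \<phi> y = - 4 * m * (y $ i - c $ i)" for i unfolding \<phi>_def pd_phi m_def ..
    have ip2: "(y - c) \<bullet> grad u y = (\<Sum>i\<in>UNIV. (y $ i - c $ i) * pd i u y)"
      by (simp add: inner_vec_def grad_def)
    have ip: "(\<Sum>i\<in>UNIV. pd i \<phi> y * G i y) = (- 4 * m / W y) * ((y - c) \<bullet> grad u y)"
      unfolding pp ip2 G_def sum_distrib_left by (rule sum.cong) (simp_all add: divide_simps algebra_simps)
    have cs: "(y - c) \<bullet> grad u y \<le> norm (y - c) * W y"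
      using norm_cauchy_schwarz[of "y - c" "grad u y"] ngW[of y]
      by (meson mult_left_mono norm_ge_zero order_trans)
    have neg4: "- 4 * m / W y \<le> 0" using m0 Wpos[of y] by (simp add: divide_nonpos_pos)
    have "(- 4 * m / W y) * ((y - c) \<bullet> grad u y) \<ge> (- 4 * m / W y) * (norm (y - c) * W y)"
      using mult_left_mono_neg[OF cs neg4] .
    also have "(- 4 * m / W y) * (norm (y - c) * W y) = - 4 * m * norm (y - c)"
      using Wpos[of y] by (simp add: field_simps)
    finally have lb: "(\<Sum>i\<in>UNIV. pd i \<phi> y * G i y) \<ge> - 4 * m * norm (y - c)" unfolding ip .
    show ?thesis
    proof (cases "y \<in> K")
      case True
      have n: "norm (y - c) \<le> R" using True by (simp add: K_def dist_norm norm_minus_commute)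
      have "(y - c) \<bullet> (y - c) \<ge> 0" by simp
      then have mR: "m \<le> R\<^sup>2" using R0 by (simp add: m_def)
      have "4 * m * norm (y - c) \<le> 4 * R\<^sup>2 * R"
        using mult_mono[OF mR n] m0 R0 by simp
      then show ?thesis using lb True by (simp add: L_def power3_eq_cube power2_eq_square)
    next
      case False
      then have "norm (y - c) > R" by (simp add: K_def dist_norm norm_minus_commute)
      then have "(norm (y - c))\<^sup>2 > R\<^sup>2" using R0 by (simp add: power_strict_mono)
      then have "m = 0" by (simp add: m_def power2_norm_eq_inner)
      then show ?thesis using lb False by simp
    qed
  qed
  have phinn: "\<phi> y \<ge> 0" for y unfolding \<phi>_def by (rule phi_nonneg)
  have Enn: "E y \<ge> 0" for y
    unfolding E_def using phinn[of y] Wpos[of y] by (intro mult_nonneg_nonneg) auto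
  have Ebound: "E y \<le> S y + L * indicator K y" if "y \<in> \<Omega>" for y
  proof -
    define X where "X = (\<Sum>i\<in>UNIV. pd i \<phi> y * G i y)"
    have e1: "exp (u y) \<le> 1" using neg[OF that] by simp
    have e0: "exp (u y) > 0" by simp
    have PH: "P y * H1 u y \<ge> 0" unfolding P_def using phinn[of y] Hpos[OF that] by simp
    have Li: "L * indicator K y \<ge> 0" using R0 by (simp add: L_def)
    have "exp (u y) * X \<ge> exp (u y) * (- L * indicator K y)"
      using phiG[of y] e0 unfolding X_def by (intro mult_left_mono) auto
    moreover have "exp (u y) * (- L * indicator K y) \<ge> - L * indicator K y"
      using e1 Li by (simp add: mult_left_le_one_le)
    ultimately have "exp (u y) * X \<ge> - L * indicator K y" by linarith
    then show ?thesis using Sid[OF that] PH unfolding X_def by linarith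
  qed
  have SLnn: "S y + L * indicator K y \<ge> 0" for y
  proof (cases "y \<in> \<Omega>")
    case True then show ?thesis using Ebound[OF True] Enn[of y] by linarith
  next
    case False then have "y \<notin> K" using KO by auto
    then show ?thesis using S0 by simp
  qed
  define \<phi>0 where "\<phi>0 = 9 * \<delta>^4"
  have phi0p: "\<phi>0 > 0" using d0 by (simp add: \<phi>0_def)
  define B where "B y = exp t * ((S y + L * indicator K y) / \<phi>0 + indicator (ball c \<delta>) y)" for y
  have Bnn: "\<forall>y. 0 \<le> B y"
    unfolding B_def using SLnn phi0p by (auto intro!: mult_nonneg_nonneg add_nonneg_nonneg divide_nonneg_pos)
  have Bball: "grad_norm (\<lambda>y. max (u y) (- t)) y \<le> B y" if y: "y \<in> ball c \<delta>" for y
  proof -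
    have yO: "y \<in> \<Omega>" using y cb d0 by auto
    define a where "a = norm (grad u y)"
    have a0: "a \<ge> 0" by (simp add: a_def)
    have aW: "a \<le> W y" using ngW by (simp add: a_def)
    have W1: "W y \<le> a + 1"
    proof -
      have "1 + a\<^sup>2 \<le> (a + 1)\<^sup>2" using a0 by (simp add: power2_eq_square algebra_simps)
      then have "sqrt (1 + a\<^sup>2) \<le> sqrt ((a + 1)\<^sup>2)" by (rule real_sqrt_le_mono)
      also have "\<dots> = a + 1" using a0 by simp
      finally show ?thesis unfolding W_def a_def[symmetric] .
    qed
    have Wp: "W y > 0" using Wpos .
    have aa: "a \<le> a\<^sup>2 / W y + 1"
    proof -
      have "a * W y \<le> a * (a + 1)" using mult_left_mono[OF W1 a0] .
      also have "\<dots> \<le> a\<^sup>2 + W y" using aW by (simp add: power2_eq_square algebra_simps)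
      finally have "a * W y \<le> a\<^sup>2 + W y" .
      then show ?thesis using Wp by (simp add: field_simps)
    qed
    have e1: "exp (u y) \<le> 1" using neg[OF yO] by simp
    have e0: "exp (u y) > 0" by simp
    have phb: "\<phi> y \<ge> \<phi>0"
    proof -
      have "norm (y - c) < \<delta>" using y by (simp add: dist_norm norm_minus_commute)
      then have "(norm (y - c))\<^sup>2 < \<delta>\<^sup>2" by (simp add: power_strict_mono)
      then have ip: "(y - c) \<bullet> (y - c) < \<delta>\<^sup>2" by (simp add: power2_norm_eq_inner)
      then have "R\<^sup>2 - (y - c) \<bullet> (y - c) \<ge> 3 * \<delta>\<^sup>2" by (simp add: R_def power2_eq_square)
      moreover have "3 * \<delta>\<^sup>2 \<ge> 0" by simp
      ultimately have "(max 0 (R\<^sup>2 - (y - c) \<bullet> (y - c)))\<^sup>2 \<ge> (3 * \<delta>\<^sup>2)\<^sup>2"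
        by (intro power_mono) auto
      then show ?thesis by (simp add: \<phi>_def phi_def \<phi>0_def power2_eq_square power4_eq_xxxx)
    qed
    have "grad_norm (\<lambda>y. max (u y) (- t)) y \<le> exp (u y + t) * a"
      using gn_bound[OF op C2 yO] by (simp add: a_def)
    also have "\<dots> = exp t * (exp (u y) * a)" by (simp add: exp_add)
    also have "exp (u y) * a \<le> exp (u y) * (a\<^sup>2 / W y) + 1"
    proof -
      have "exp (u y) * a \<le> exp (u y) * (a\<^sup>2 / W y + 1)" using aa e0 by (intro mult_left_mono) auto
      also have "\<dots> = exp (u y) * (a\<^sup>2 / W y) + exp (u y)" by (simp add: algebra_simps)
      finally show ?thesis using e1 by linarith
    qed
    also have "exp (u y) * (a\<^sup>2 / W y) \<le> E y / \<phi>0"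
    proof -
      have "E y = \<phi> y * (exp (u y) * (a\<^sup>2 / W y))" by (simp add: E_def a_def)
      moreover have "exp (u y) * (a\<^sup>2 / W y) \<ge> 0" using Wp by simp
      ultimately have "\<phi>0 * (exp (u y) * (a\<^sup>2 / W y)) \<le> E y" using phb
        by (metis mult_right_mono)
      then show ?thesis using phi0p by (simp add: field_simps)
    qed
    also have "E y / \<phi>0 \<le> (S y + L * indicator K y) / \<phi>0"
      using Ebound[OF yO] phi0p by (simp add: divide_right_mono)
    finally show ?thesis using y by (simp add: B_def mult_left_mono)
  qed
  have mS: "S \<in> borel_measurable lborel" using cS by (simp add: borel_measurable_continuous_onI)
  have Ks: "K \<in> sets lborel" using cK by (simp add: compact_imp_closed borel_closed)
  have bs: "ball c \<delta> \<in> sets lborel" by (simp add: borel_open)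
  have mB: "B \<in> borel_measurable lborel"
    unfolding B_def using mS Ks bs
    by (intro borel_measurable_times borel_measurable_add borel_measurable_divide borel_measurable_const
        borel_measurable_indicator) auto
  have iK: "integrable lborel (indicator K :: _ \<Rightarrow> real)"
    using Ks emeasure_compact_finite[OF cK] by (intro integrable_real_indicator) (auto simp: less_top)
  have ib: "integrable lborel (indicator (ball c \<delta>) :: _ \<Rightarrow> real)"
    using bs emeasure_bounded_finite[OF bounded_ball, of c \<delta>] by (intro integrable_real_indicator) (auto simp: less_top)
  have iSL: "integrable lborel (\<lambda>y. S y + L * indicator K y)" using Sint iK by auto
  have iB1: "integrable lborel (\<lambda>y. (S y + L * indicator K y) / \<phi>0 + indicator (ball c \<delta>) y)"
    using iSL ib by auto
  have iB: "integrable lborel B" unfolding B_def using iB1 by auto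
  have intB: "integral\<^sup>L lborel B = Mloc c \<delta> t"
  proof -
    have "integral\<^sup>L lborel B = exp t * ((integral\<^sup>L lborel S + L * measure lborel K) / \<phi>0 + measure lborel (ball c \<delta>))"
      unfolding B_def using iSL iB1 Sint iK ib by simp
    also have "\<dots> = Mloc c \<delta> t" unfolding Sz Mloc_def L_def K_def R_def \<phi>0_def by simp
    finally show ?thesis .
  qed
  have "(\<integral>\<^sup>+x. ennreal (B x) \<partial>lborel) = ennreal (integral\<^sup>L lborel B)"
    using nn_integral_eq_integral[OF iB] Bnn by simp
  then have "(\<integral>\<^sup>+x. ennreal (B x) \<partial>lborel) \<le> ennreal (Mloc c \<delta> t)" using intB by simp
  then show ?thesis using mB Bnn Bball by blast
qed

lemma Mloc_nonneg: "Mloc c \<delta> t \<ge> 0" if "\<delta> > 0"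
  unfolding Mloc_def using that by (intro mult_nonneg_nonneg add_nonneg_nonneg divide_nonneg_pos) auto

lemma grad_norm_nonneg: "grad_norm f x \<ge> 0" by (simp add: grad_norm_def)

theorem theorem3p1:
  fixes \<Omega> \<omega> :: "(real^'n::finite) set" and t :: real
  assumes "open \<Omega>" "connected \<Omega>" "\<Omega> \<noteq> {}"
    and "open \<omega>" "compact (closure \<omega>)" "closure \<omega> \<subseteq> \<Omega>"
    and "t > 0"
  shows "\<exists>C>0. \<forall>u :: real^'n \<Rightarrow> real.
           C2_on \<Omega> u \<and> (\<forall>x\<in>\<Omega>. u x \<le> 0) \<and> H1_subharmonic \<Omega> (\<lambda>x. ereal (u x)) \<longrightarrow>
           (\<integral>\<^sup>+x\<in>\<omega>. ennreal (grad_norm (\<lambda>y. max (u y) (- t)) x) \<partial>lebesgue) \<le> ennreal C"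
proof -
  have op: "open \<Omega>" using assms by simp
  have "\<forall>x\<in>\<Omega>. \<exists>d. d > 0 \<and> cball x (2 * d) \<subseteq> \<Omega>"
  proof
    fix x assume "x \<in> \<Omega>"
    then obtain e where "e > 0" "cball x e \<subseteq> \<Omega>" using op open_contains_cball by blast
    then show "\<exists>d. d > 0 \<and> cball x (2 * d) \<subseteq> \<Omega>" by (intro exI[of _ "e / 2"]) auto
  qed
  then obtain d where d: "\<And>x. x \<in> \<Omega> \<Longrightarrow> d x > 0 \<and> cball x (2 * d x) \<subseteq> \<Omega>" by metis
  have cov: "closure \<omega> \<subseteq> (\<Union>c\<in>closure \<omega>. ball c (d c))"
  proof
    fix x assume x: "x \<in> closure \<omega>"
    then have "d x > 0" using d assms(6) by blast
    then show "x \<in> (\<Union>c\<in>closure \<omega>. ball c (d c))" using x by (intro UN_I[of x]) auto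
  qed
  obtain Cs where Cs: "Cs \<subseteq> closure \<omega>" "finite Cs" "closure \<omega> \<subseteq> (\<Union>c\<in>Cs. ball c (d c))"
    using compactE_image[OF assms(5) _ cov] by blast
  have CsO: "\<And>c. c \<in> Cs \<Longrightarrow> d c > 0 \<and> cball c (2 * d c) \<subseteq> \<Omega>" using Cs(1) assms(6) d by blast
  define Ctot where "Ctot = 1 + (\<Sum>c\<in>Cs. Mloc c (d c) t)"
  have Msum: "(\<Sum>c\<in>Cs. Mloc c (d c) t) \<ge> 0" using CsO Mloc_nonneg by (intro sum_nonneg) blast
  have "Ctot > 0" using Msum by (simp add: Ctot_def)
  moreover have "\<forall>u :: real^'n \<Rightarrow> real.
           C2_on \<Omega> u \<and> (\<forall>x\<in>\<Omega>. u x \<le> 0) \<and> H1_subharmonic \<Omega> (\<lambda>x. ereal (u x)) \<longrightarrow>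
           (\<integral>\<^sup>+x\<in>\<omega>. ennreal (grad_norm (\<lambda>y. max (u y) (- t)) x) \<partial>lebesgue) \<le> ennreal Ctot"
  proof (intro allI impI)
    fix u :: "real^'n \<Rightarrow> real"
    assume hu: "C2_on \<Omega> u \<and> (\<forall>x\<in>\<Omega>. u x \<le> 0) \<and> H1_subharmonic \<Omega> (\<lambda>x. ereal (u x))"
    have C2: "C2_on \<Omega> u" and neg: "\<And>x. x \<in> \<Omega> \<Longrightarrow> u x \<le> 0" using hu by auto
    have Hpos: "\<And>x. x \<in> \<Omega> \<Longrightarrow> H1 u x \<ge> 0" using H1_nonneg[OF op C2] hu by blast
    have "\<forall>c\<in>Cs. \<exists>B. B \<in> borel_measurable lborel \<and> (\<forall>x. 0 \<le> B x) \<and>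
         (\<forall>x\<in>ball c (d c). grad_norm (\<lambda>y. max (u y) (- t)) x \<le> B x) \<and>
         (\<integral>\<^sup>+x. ennreal (B x) \<partial>lborel) \<le> ennreal (Mloc c (d c) t)"
    proof
      fix c assume "c \<in> Cs"
      then show "\<exists>B. B \<in> borel_measurable lborel \<and> (\<forall>x. 0 \<le> B x) \<and>
         (\<forall>x\<in>ball c (d c). grad_norm (\<lambda>y. max (u y) (- t)) x \<le> B x) \<and>
         (\<integral>\<^sup>+x. ennreal (B x) \<partial>lborel) \<le> ennreal (Mloc c (d c) t)"
        using local_est[OF op C2 neg Hpos] CsO by blast
    qed
    then obtain B where B: "\<And>c. c \<in> Cs \<Longrightarrow> B c \<in> borel_measurable lborel \<and> (\<forall>x. 0 \<le> B c x) \<and>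
         (\<forall>x\<in>ball c (d c). grad_norm (\<lambda>y. max (u y) (- t)) x \<le> B c x) \<and>
         (\<integral>\<^sup>+x. ennreal (B c x) \<partial>lborel) \<le> ennreal (Mloc c (d c) t)" by metis
    have pw: "ennreal (grad_norm (\<lambda>y. max (u y) (- t)) x) * indicator \<omega> x \<le> (\<Sum>c\<in>Cs. ennreal (B c x))" for x
    proof (cases "x \<in> \<omega>")
      case True
      then have "x \<in> closure \<omega>" using closure_subset by blast
      then obtain c where c: "c \<in> Cs" "x \<in> ball c (d c)" using Cs(3) by blast
      then have "grad_norm (\<lambda>y. max (u y) (- t)) x \<le> B c x" using B by blast
      then have "ennreal (grad_norm (\<lambda>y. max (u y) (- t)) x) \<le> ennreal (B c x)" by (rule ennreal_leI)
      also have "\<dots> \<le> (\<Sum>c\<in>Cs. ennreal (B c x))"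
        using c Cs(2) by (intro member_le_sum) auto
      finally show ?thesis using True by simp
    next
      case False then show ?thesis by simp
    qed
    have mB: "\<And>c. c \<in> Cs \<Longrightarrow> (\<lambda>x. ennreal (B c x)) \<in> borel_measurable lborel" using B by auto
    have mS: "(\<lambda>x. \<Sum>c\<in>Cs. ennreal (B c x)) \<in> borel_measurable lborel"
      using mB by (intro borel_measurable_sum) auto
    have "(\<integral>\<^sup>+x\<in>\<omega>. ennreal (grad_norm (\<lambda>y. max (u y) (- t)) x) \<partial>lebesgue)
        \<le> (\<integral>\<^sup>+x. (\<Sum>c\<in>Cs. ennreal (B c x)) \<partial>lebesgue)"
      by (intro nn_integral_mono pw)
    also have "\<dots> = (\<integral>\<^sup>+x. (\<Sum>c\<in>Cs. ennreal (B c x)) \<partial>lborel)"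
      using mS by (simp add: nn_integral_completion)
    also have "\<dots> = (\<Sum>c\<in>Cs. \<integral>\<^sup>+x. ennreal (B c x) \<partial>lborel)"
      using mB by (rule nn_integral_sum)
    also have "\<dots> \<le> (\<Sum>c\<in>Cs. ennreal (Mloc c (d c) t))"
      using B by (intro sum_mono) blast
    also have "\<dots> = ennreal (\<Sum>c\<in>Cs. Mloc c (d c) t)"
      using CsO Mloc_nonneg by (intro sum_ennreal) blast
    also have "\<dots> \<le> ennreal Ctot" unfolding Ctot_def by (rule ennreal_leI) simp
    finally show "(\<integral>\<^sup>+x\<in>\<omega>. ennreal (grad_norm (\<lambda>y. max (u y) (- t)) x) \<partial>lebesgue) \<le> ennreal Ctot" .
  qed
  ultimately show ?thesis by blast
qed

end
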